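(* If $\mathbb{C}$ is a regular majority category, then the Pairwise Chinese Remainder Theorem holds in $\mathbb{C}$.
   Context: A category is regular if it has finite limits and coequalizers of kernel pairs and regular epimorphisms are pullback-stable. For $w:S\to W$ and subobject $A$ of $W$, $w\in_S A$ means $w$ factors through a representative of $A$. A ternary relation $R\leqslant X\times Y\times Z$ is majority-selecting if for all $S$ and $x,x':S\to X$, $y,y':S\to Y$, $z,z':S\to Z$: $(x,y,z')\in_S R$, $(x,y',z)\in_S R$, $(x',y,z)\in_S R$ imply $(x,y,z)\in_S R$; a majority category is one in which every ternary relation is majority-selecting. For an equivalence relation $\theta$ on $X$ and $a,b:S\to X$, $a\equiv b\bmod\theta$ means $(a,b)\in_S\theta$. An equivalence relation is effective if it is the kernel pair of some morphism. Given $a_1,\dots,a_m:S\to X$ and equivalence relations $\theta_1,\dots,\theta_m$ on $X$, the system $x\equiv a_i\bmod\theta_i$ ($i=1,\dots,m$) is approximately solvable if there are a regular epimorphism $\alpha:Q\to S$ and a morphism $a:Q\to X$ with $a\equiv a_i\alpha\bmod\theta_i$ for all $i$; it is approximately pairwise solvable if for all $i,j$ the two-equation subsystem for $i,j$ is approximately solvable. The Pairwise Chinese Remainder Theorem holds in $\mathbb{C}$ if for every object $X$, every $m$, all $a_1,\dots,a_m:S\to X$ and all effective equivalence relations $\theta_1,\dots,\theta_m$ on $X$, approximate pairwise solvability implies approximate solvability. *)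

theory Defs
  imports Main
begin

text \<open>Categories given explicitly by objects, arrows, domain, codomain,
identities and composition. Comp g f is g after f (requires Cod f = Dom g).\<close>

record ('o,'a) cat =
  Obj  :: "'o set"
  Arr  :: "'a set"
  Dom  :: "'a \<Rightarrow> 'o"
  Cod  :: "'a \<Rightarrow> 'o"
  Id   :: "'o \<Rightarrow> 'a"
  Comp :: "'a \<Rightarrow> 'a \<Rightarrow> 'a"

definition hom :: "('o,'a) cat \<Rightarrow> 'o \<Rightarrow> 'o \<Rightarrow> 'a set" where
  "hom C A B = {f \<in> Arr C. Dom C f = A \<and> Cod C f = B}"

definition category :: "('o,'a) cat \<Rightarrow> bool" where
  "category C \<longleftrightarrow>
     (\<forall>f\<in>Arr C. Dom C f \<in> Obj C \<and> Cod C f \<in> Obj C) \<and>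
     (\<forall>A\<in>Obj C. Id C A \<in> hom C A A) \<and>
     (\<forall>f\<in>Arr C. \<forall>g\<in>Arr C. Cod C f = Dom C g \<longrightarrow> Comp C g f \<in> hom C (Dom C f) (Cod C g)) \<and>
     (\<forall>f\<in>Arr C. Comp C f (Id C (Dom C f)) = f \<and> Comp C (Id C (Cod C f)) f = f) \<and>
     (\<forall>f\<in>Arr C. \<forall>g\<in>Arr C. \<forall>h\<in>Arr C. Cod C f = Dom C g \<and> Cod C g = Dom C h \<longrightarrow>
        Comp C h (Comp C g f) = Comp C (Comp C h g) f)"

definition is_mono :: "('o,'a) cat \<Rightarrow> 'a \<Rightarrow> bool" where
  "is_mono C m \<longleftrightarrow> m \<in> Arr C \<and>
     (\<forall>g\<in>Arr C. \<forall>h\<in>Arr C. Cod C g = Dom C m \<and> Cod C h = Dom C m \<and> Dom C g = Dom C h \<and>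
        Comp C m g = Comp C m h \<longrightarrow> g = h)"

definition iso :: "('o,'a) cat \<Rightarrow> 'a \<Rightarrow> bool" where
  "iso C f \<longleftrightarrow> f \<in> Arr C \<and>
     (\<exists>g\<in>hom C (Cod C f) (Dom C f). Comp C g f = Id C (Dom C f) \<and> Comp C f g = Id C (Cod C f))"

definition is_pullback :: "('o,'a) cat \<Rightarrow> 'a \<Rightarrow> 'a \<Rightarrow> 'a \<Rightarrow> 'a \<Rightarrow> bool" where
  "is_pullback C f g p q \<longleftrightarrow>
     f \<in> Arr C \<and> g \<in> Arr C \<and> p \<in> Arr C \<and> q \<in> Arr C \<and>
     Cod C f = Cod C g \<and> Dom C p = Dom C q \<and> Cod C p = Dom C f \<and> Cod C q = Dom C g \<and>
     Comp C f p = Comp C g q \<and>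
     (\<forall>u\<in>Arr C. \<forall>v\<in>Arr C. Dom C u = Dom C v \<and> Cod C u = Dom C f \<and> Cod C v = Dom C g \<and>
        Comp C f u = Comp C g v \<longrightarrow>
        (\<exists>!h. h \<in> hom C (Dom C u) (Dom C p) \<and> Comp C p h = u \<and> Comp C q h = v))"

definition terminal :: "('o,'a) cat \<Rightarrow> 'o \<Rightarrow> bool" where
  "terminal C T \<longleftrightarrow> T \<in> Obj C \<and> (\<forall>A\<in>Obj C. \<exists>!f. f \<in> hom C A T)"

text \<open>Finite limits: a terminal object and all pullbacks (standard equivalent
formulation of finite completeness).\<close>
definition has_finite_limits :: "('o,'a) cat \<Rightarrow> bool" where
  "has_finite_limits C \<longleftrightarrow> (\<exists>T. terminal C T) \<and>
     (\<forall>f\<in>Arr C. \<forall>g\<in>Arr C. Cod C f = Cod C g \<longrightarrow> (\<exists>p q. is_pullback C f g p q))"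

definition is_coequalizer :: "('o,'a) cat \<Rightarrow> 'a \<Rightarrow> 'a \<Rightarrow> 'a \<Rightarrow> bool" where
  "is_coequalizer C p q e \<longleftrightarrow>
     p \<in> Arr C \<and> q \<in> Arr C \<and> e \<in> Arr C \<and>
     Dom C p = Dom C q \<and> Cod C p = Cod C q \<and> Dom C e = Cod C p \<and>
     Comp C e p = Comp C e q \<and>
     (\<forall>u\<in>Arr C. Dom C u = Cod C p \<and> Comp C u p = Comp C u q \<longrightarrow>
        (\<exists>!h. h \<in> hom C (Cod C e) (Cod C u) \<and> Comp C h e = u))"

definition regular_epi :: "('o,'a) cat \<Rightarrow> 'a \<Rightarrow> bool" where
  "regular_epi C e \<longleftrightarrow> (\<exists>p q. is_coequalizer C p q e)"

definition kernel_pair :: "('o,'a) cat \<Rightarrow> 'a \<Rightarrow> 'a \<Rightarrow> 'a \<Rightarrow> bool" where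
  "kernel_pair C f p q \<longleftrightarrow> is_pullback C f f p q"

definition regular_category :: "('o,'a) cat \<Rightarrow> bool" where
  "regular_category C \<longleftrightarrow> category C \<and> has_finite_limits C \<and>
     (\<forall>f p q. kernel_pair C f p q \<longrightarrow> (\<exists>e. is_coequalizer C p q e)) \<and>
     (\<forall>e g p q. regular_epi C e \<and> is_pullback C e g p q \<longrightarrow> regular_epi C q)"

definition is_product2 :: "('o,'a) cat \<Rightarrow> 'o \<Rightarrow> 'o \<Rightarrow> 'a \<Rightarrow> 'a \<Rightarrow> bool" where
  "is_product2 C X Y p1 p2 \<longleftrightarrow>
     p1 \<in> Arr C \<and> p2 \<in> Arr C \<and> Dom C p1 = Dom C p2 \<and> Cod C p1 = X \<and> Cod C p2 = Y \<and>
     (\<forall>x\<in>Arr C. \<forall>y\<in>Arr C. Dom C x = Dom C y \<and> Cod C x = X \<and> Cod C y = Y \<longrightarrow>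
        (\<exists>!h. h \<in> hom C (Dom C x) (Dom C p1) \<and> Comp C p1 h = x \<and> Comp C p2 h = y))"

definition is_product3 :: "('o,'a) cat \<Rightarrow> 'o \<Rightarrow> 'o \<Rightarrow> 'o \<Rightarrow> 'a \<Rightarrow> 'a \<Rightarrow> 'a \<Rightarrow> bool" where
  "is_product3 C X Y Z p1 p2 p3 \<longleftrightarrow>
     p1 \<in> Arr C \<and> p2 \<in> Arr C \<and> p3 \<in> Arr C \<and> Dom C p1 = Dom C p2 \<and> Dom C p1 = Dom C p3 \<and>
     Cod C p1 = X \<and> Cod C p2 = Y \<and> Cod C p3 = Z \<and>
     (\<forall>x\<in>Arr C. \<forall>y\<in>Arr C. \<forall>z\<in>Arr C. Dom C x = Dom C y \<and> Dom C x = Dom C z \<and>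
        Cod C x = X \<and> Cod C y = Y \<and> Cod C z = Z \<longrightarrow>
        (\<exists>!h. h \<in> hom C (Dom C x) (Dom C p1) \<and> Comp C p1 h = x \<and> Comp C p2 h = y \<and> Comp C p3 h = z))"

definition tuple2 :: "('o,'a) cat \<Rightarrow> 'a \<Rightarrow> 'a \<Rightarrow> 'a \<Rightarrow> 'a \<Rightarrow> 'a" where
  "tuple2 C p1 p2 x y = (THE h. h \<in> hom C (Dom C x) (Dom C p1) \<and> Comp C p1 h = x \<and> Comp C p2 h = y)"

definition tuple3 :: "('o,'a) cat \<Rightarrow> 'a \<Rightarrow> 'a \<Rightarrow> 'a \<Rightarrow> 'a \<Rightarrow> 'a \<Rightarrow> 'a \<Rightarrow> 'a" where
  "tuple3 C p1 p2 p3 x y z =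
     (THE h. h \<in> hom C (Dom C x) (Dom C p1) \<and> Comp C p1 h = x \<and> Comp C p2 h = y \<and> Comp C p3 h = z)"

text \<open>w \<in>_S A : w factors through the mono r representing the subobject A.\<close>
definition gmem :: "('o,'a) cat \<Rightarrow> 'a \<Rightarrow> 'a \<Rightarrow> bool" where
  "gmem C w r \<longleftrightarrow> (\<exists>s\<in>hom C (Dom C w) (Dom C r). Comp C r s = w)"

text \<open>A ternary relation R \<le> X \<times> Y \<times> Z is given by a product (p1,p2,p3) of X, Y, Z
and a mono r into the product object.\<close>
definition majority_selecting ::
  "('o,'a) cat \<Rightarrow> 'o \<Rightarrow> 'o \<Rightarrow> 'o \<Rightarrow> 'a \<Rightarrow> 'a \<Rightarrow> 'a \<Rightarrow> 'a \<Rightarrow> bool" where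
  "majority_selecting C X Y Z p1 p2 p3 r \<longleftrightarrow>
     (\<forall>S\<in>Obj C. \<forall>x\<in>hom C S X. \<forall>x'\<in>hom C S X. \<forall>y\<in>hom C S Y. \<forall>y'\<in>hom C S Y.
        \<forall>z\<in>hom C S Z. \<forall>z'\<in>hom C S Z.
        gmem C (tuple3 C p1 p2 p3 x y z') r \<and>
        gmem C (tuple3 C p1 p2 p3 x y' z) r \<and>
        gmem C (tuple3 C p1 p2 p3 x' y z) r \<longrightarrow>
        gmem C (tuple3 C p1 p2 p3 x y z) r)"

definition majority_category :: "('o,'a) cat \<Rightarrow> bool" where
  "majority_category C \<longleftrightarrow>
     (\<forall>X\<in>Obj C. \<forall>Y\<in>Obj C. \<forall>Z\<in>Obj C. \<forall>p1 p2 p3 r.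
        is_product3 C X Y Z p1 p2 p3 \<and> is_mono C r \<and> Cod C r = Dom C p1 \<longrightarrow>
        majority_selecting C X Y Z p1 p2 p3 r)"

text \<open>A binary relation on X is a triple (q1, q2, t): a product q1, q2 of X with
itself and a mono t into the product object.
a \<equiv> b mod \<theta> means (a, b) \<in>_S \<theta>.\<close>
definition congr :: "('o,'a) cat \<Rightarrow> 'a \<times> 'a \<times> 'a \<Rightarrow> 'a \<Rightarrow> 'a \<Rightarrow> bool" where
  "congr C th a b = (case th of (q1, q2, t) \<Rightarrow> gmem C (tuple2 C q1 q2 a b) t)"

definition equivalence_relation :: "('o,'a) cat \<Rightarrow> 'o \<Rightarrow> 'a \<times> 'a \<times> 'a \<Rightarrow> bool" where
  "equivalence_relation C X th \<longleftrightarrow>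
     (case th of (q1, q2, t) \<Rightarrow>
        is_product2 C X X q1 q2 \<and> is_mono C t \<and> Cod C t = Dom C q1) \<and>
     (\<forall>S\<in>Obj C.
        (\<forall>a\<in>hom C S X. congr C th a a) \<and>
        (\<forall>a\<in>hom C S X. \<forall>b\<in>hom C S X. congr C th a b \<longrightarrow> congr C th b a) \<and>
        (\<forall>a\<in>hom C S X. \<forall>b\<in>hom C S X. \<forall>c\<in>hom C S X.
            congr C th a b \<and> congr C th b c \<longrightarrow> congr C th a c))"

definition effective :: "('o,'a) cat \<Rightarrow> 'o \<Rightarrow> 'a \<times> 'a \<times> 'a \<Rightarrow> bool" where
  "effective C X th \<longleftrightarrow>
     (case th of (q1, q2, t) \<Rightarrow>
        (\<exists>f p k. Dom C f = X \<and> kernel_pair C f p k \<and>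
           (\<exists>i. iso C i \<and> i \<in> hom C (Dom C p) (Dom C t) \<and>
                Comp C q1 (Comp C t i) = p \<and> Comp C q2 (Comp C t i) = k)))"

definition approx_solvable ::
  "('o,'a) cat \<Rightarrow> 'o \<Rightarrow> 'o \<Rightarrow> nat set \<Rightarrow> (nat \<Rightarrow> 'a) \<Rightarrow> (nat \<Rightarrow> 'a \<times> 'a \<times> 'a) \<Rightarrow> bool" where
  "approx_solvable C X S I a th \<longleftrightarrow>
     (\<exists>Q \<alpha> b. regular_epi C \<alpha> \<and> \<alpha> \<in> hom C Q S \<and> b \<in> hom C Q X \<and>
        (\<forall>i\<in>I. congr C (th i) b (Comp C (a i) \<alpha>)))"

definition approx_pairwise_solvable ::
  "('o,'a) cat \<Rightarrow> 'o \<Rightarrow> 'o \<Rightarrow> nat set \<Rightarrow> (nat \<Rightarrow> 'a) \<Rightarrow> (nat \<Rightarrow> 'a \<times> 'a \<times> 'a) \<Rightarrow> bool" where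
  "approx_pairwise_solvable C X S I a th \<longleftrightarrow>
     (\<forall>i\<in>I. \<forall>j\<in>I. approx_solvable C X S {i, j} a th)"

definition pairwise_CRT :: "('o,'a) cat \<Rightarrow> bool" where
  "pairwise_CRT C \<longleftrightarrow>
     (\<forall>X\<in>Obj C. \<forall>S\<in>Obj C. \<forall>m::nat. \<forall>a th.
        1 \<le> m \<and>
        (\<forall>i<m. a i \<in> hom C S X \<and> equivalence_relation C X (th i) \<and> effective C X (th i)) \<and>
        approx_pairwise_solvable C X S {..<m} a th \<longrightarrow>
        approx_solvable C X S {..<m} a th)"

end

theory Submission
  imports Defs
begin

locale rcat =
  fixes C :: "('o,'a) cat"
  assumes reg: "regular_category C"
begin

abbreviation cc (infixr "\<cdot>" 55) where "g \<cdot> f \<equiv> Comp C g f"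

lemma cat: "category C" using reg unfolding regular_category_def by simp
lemma fl: "has_finite_limits C" using reg unfolding regular_category_def by simp
lemma kpcoeq: "kernel_pair C f p q \<Longrightarrow> \<exists>e. is_coequalizer C p q e"
  using reg unfolding regular_category_def by blast
lemma pbstab: "regular_epi C e \<Longrightarrow> is_pullback C e g p q \<Longrightarrow> regular_epi C q"
  using reg unfolding regular_category_def by blast

lemma dom_obj: "f \<in> Arr C \<Longrightarrow> Dom C f \<in> Obj C"
  using cat unfolding category_def by blast
lemma cod_obj: "f \<in> Arr C \<Longrightarrow> Cod C f \<in> Obj C"
  using cat unfolding category_def by blast
lemma id_hom: "A \<in> Obj C \<Longrightarrow> Id C A \<in> hom C A A"
  using cat unfolding category_def by blast
lemma id_arr[simp]: "A \<in> Obj C \<Longrightarrow> Id C A \<in> Arr C"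
  using id_hom unfolding hom_def by blast
lemma id_dom[simp]: "A \<in> Obj C \<Longrightarrow> Dom C (Id C A) = A"
  using id_hom unfolding hom_def by blast
lemma id_cod[simp]: "A \<in> Obj C \<Longrightarrow> Cod C (Id C A) = A"
  using id_hom unfolding hom_def by blast
lemma comp_hom: "f \<in> Arr C \<Longrightarrow> g \<in> Arr C \<Longrightarrow> Cod C f = Dom C g \<Longrightarrow> g \<cdot> f \<in> hom C (Dom C f) (Cod C g)"
  using cat unfolding category_def by blast
lemma comp_arr[simp]: "f \<in> Arr C \<Longrightarrow> g \<in> Arr C \<Longrightarrow> Cod C f = Dom C g \<Longrightarrow> g \<cdot> f \<in> Arr C"
  using comp_hom unfolding hom_def by blast
lemma dom_comp[simp]: "f \<in> Arr C \<Longrightarrow> g \<in> Arr C \<Longrightarrow> Cod C f = Dom C g \<Longrightarrow> Dom C (g \<cdot> f) = Dom C f"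
  using comp_hom unfolding hom_def by blast
lemma cod_comp[simp]: "f \<in> Arr C \<Longrightarrow> g \<in> Arr C \<Longrightarrow> Cod C f = Dom C g \<Longrightarrow> Cod C (g \<cdot> f) = Cod C g"
  using comp_hom unfolding hom_def by blast
lemma comp_id_r[simp]: "f \<in> Arr C \<Longrightarrow> f \<cdot> Id C (Dom C f) = f"
  using cat unfolding category_def by blast
lemma comp_id_l[simp]: "f \<in> Arr C \<Longrightarrow> Id C (Cod C f) \<cdot> f = f"
  using cat unfolding category_def by blast
lemma assoc[simp]: "f \<in> Arr C \<Longrightarrow> g \<in> Arr C \<Longrightarrow> h \<in> Arr C \<Longrightarrow> Cod C f = Dom C g \<Longrightarrow> Cod C g = Dom C h
   \<Longrightarrow> (h \<cdot> g) \<cdot> f = h \<cdot> (g \<cdot> f)"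
  using cat unfolding category_def by metis

lemma hom_iff: "f \<in> hom C A B \<longleftrightarrow> f \<in> Arr C \<and> Dom C f = A \<and> Cod C f = B"
  unfolding hom_def by simp

definition epi where
  "epi e \<longleftrightarrow> e \<in> Arr C \<and> (\<forall>g\<in>Arr C. \<forall>h\<in>Arr C. Dom C g = Cod C e \<and> Dom C h = Cod C e \<and>
      Cod C g = Cod C h \<and> g \<cdot> e = h \<cdot> e \<longrightarrow> g = h)"

lemma epiD: "epi e \<Longrightarrow> g \<in> Arr C \<Longrightarrow> h \<in> Arr C \<Longrightarrow> Dom C g = Cod C e \<Longrightarrow> Dom C h = Cod C e \<Longrightarrow>
      Cod C g = Cod C h \<Longrightarrow> g \<cdot> e = h \<cdot> e \<Longrightarrow> g = h"
  unfolding epi_def by blast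

lemma monoD: "is_mono C m \<Longrightarrow> g \<in> Arr C \<Longrightarrow> h \<in> Arr C \<Longrightarrow> Cod C g = Dom C m \<Longrightarrow> Cod C h = Dom C m \<Longrightarrow>
      Dom C g = Dom C h \<Longrightarrow> m \<cdot> g = m \<cdot> h \<Longrightarrow> g = h"
  unfolding is_mono_def by blast

lemma coeqD: assumes "is_coequalizer C p q e"
  shows "p \<in> Arr C" "q \<in> Arr C" "e \<in> Arr C" "Dom C p = Dom C q" "Cod C p = Cod C q"
    "Dom C e = Cod C p" "e \<cdot> p = e \<cdot> q"
  using assms unfolding is_coequalizer_def by auto

lemma coeq_univ: assumes "is_coequalizer C p q e" "u \<in> Arr C" "Dom C u = Cod C p" "u \<cdot> p = u \<cdot> q"
  shows "\<exists>!h. h \<in> hom C (Cod C e) (Cod C u) \<and> h \<cdot> e = u"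
  using assms unfolding is_coequalizer_def by blast

lemma coeq_epi: assumes "is_coequalizer C p q e" shows "epi e"
  unfolding epi_def
proof (intro conjI coeqD(3)[OF assms] ballI impI)
  note ep = coeqD[OF assms]
  fix g h assume g: "g \<in> Arr C" and h: "h \<in> Arr C" and
    H: "Dom C g = Cod C e \<and> Dom C h = Cod C e \<and> Cod C g = Cod C h \<and> g \<cdot> e = h \<cdot> e"
  have Hg: "Dom C g = Cod C e" using H by blast
  let ?u = "g \<cdot> e"
  have u: "?u \<in> Arr C" "Dom C ?u = Cod C p" using ep g Hg by auto
  have "?u \<cdot> p = g \<cdot> (e \<cdot> p)" using ep g Hg by simp
  also have "\<dots> = g \<cdot> (e \<cdot> q)" using ep by simp
  also have "\<dots> = ?u \<cdot> q" using ep g Hg by simp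
  finally have "?u \<cdot> p = ?u \<cdot> q" .
  from coeq_univ[OF assms u this]
  have "\<exists>!k. k \<in> hom C (Cod C e) (Cod C ?u) \<and> k \<cdot> e = ?u" .
  moreover have "g \<in> hom C (Cod C e) (Cod C ?u)" "h \<in> hom C (Cod C e) (Cod C ?u)"
    using g h H ep by (auto simp: hom_iff)
  ultimately show "g = h" using H by metis
qed

lemma regular_epi_epi: "regular_epi C e \<Longrightarrow> epi e"
  unfolding regular_epi_def using coeq_epi by blast


lemma pbD: assumes "is_pullback C f g p q"
  shows "f \<in> Arr C" "g \<in> Arr C" "p \<in> Arr C" "q \<in> Arr C" "Cod C f = Cod C g" "Dom C p = Dom C q"
    "Cod C p = Dom C f" "Cod C q = Dom C g" "f \<cdot> p = g \<cdot> q"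
  using assms unfolding is_pullback_def by auto

lemma pb_univ: assumes "is_pullback C f g p q" "u \<in> Arr C" "v \<in> Arr C" "Dom C u = Dom C v"
   "Cod C u = Dom C f" "Cod C v = Dom C g" "f \<cdot> u = g \<cdot> v"
  shows "\<exists>!h. h \<in> hom C (Dom C u) (Dom C p) \<and> p \<cdot> h = u \<and> q \<cdot> h = v"
  using assms unfolding is_pullback_def by blast

lemma pb_ex: "f \<in> Arr C \<Longrightarrow> g \<in> Arr C \<Longrightarrow> Cod C f = Cod C g \<Longrightarrow> \<exists>p q. is_pullback C f g p q"
  using fl unfolding has_finite_limits_def by blast

lemma regD: "regular_epi C e \<Longrightarrow> e \<in> Arr C"
  unfolding regular_epi_def is_coequalizer_def by blast

lemma cover_pb: assumes "regular_epi C e" "s \<in> Arr C" "Cod C s = Cod C e"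
  shows "\<exists>u v. regular_epi C v \<and> u \<in> hom C (Dom C v) (Dom C e) \<and> v \<in> hom C (Dom C v) (Dom C s) \<and>
     e \<cdot> u = s \<cdot> v"
proof -
  obtain u v where pb: "is_pullback C e s u v" using pb_ex[OF regD[OF assms(1)] assms(2)] assms(3) by metis
  have "regular_epi C v" using pbstab[OF assms(1) pb] .
  then show ?thesis using pbD[OF pb] apply (rule_tac exI[of _ u]) apply (rule_tac exI[of _ v]) by (auto simp: hom_iff)
qed

lemma epi_comp: assumes "epi e1" "epi e2" "Cod C e1 = Dom C e2" shows "epi (e2 \<cdot> e1)"
proof -
  have a: "e1 \<in> Arr C" "e2 \<in> Arr C" using assms unfolding epi_def by auto
  show ?thesis unfolding epi_def
  proof (intro conjI ballI impI)
    show "e2 \<cdot> e1 \<in> Arr C" using a assms by simp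
    fix g h assume g: "g \<in> Arr C" and h: "h \<in> Arr C" and
      H: "Dom C g = Cod C (e2 \<cdot> e1) \<and> Dom C h = Cod C (e2 \<cdot> e1) \<and> Cod C g = Cod C h \<and> g \<cdot> (e2 \<cdot> e1) = h \<cdot> (e2 \<cdot> e1)"
    have dg: "Dom C g = Cod C e2" "Dom C h = Cod C e2" "Cod C g = Cod C h" using H a assms by auto
    have "(g \<cdot> e2) \<cdot> e1 = (h \<cdot> e2) \<cdot> e1" using H a assms g h dg by simp
    then have "g \<cdot> e2 = h \<cdot> e2" using epiD[OF assms(1)] a assms g h dg by simp
    then show "g = h" using epiD[OF assms(2)] a assms g h dg by simp
  qed
qed

definition strong where
  "strong e \<longleftrightarrow> epi e \<and> (\<forall>m u v. is_mono C m \<and> u \<in> Arr C \<and> v \<in> Arr C \<and> Dom C u = Dom C e \<and>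
     Cod C u = Dom C m \<and> Dom C v = Cod C e \<and> Cod C v = Cod C m \<and> m \<cdot> u = v \<cdot> e \<longrightarrow>
     (\<exists>d. d \<in> hom C (Cod C e) (Dom C m) \<and> d \<cdot> e = u \<and> m \<cdot> d = v))"

lemma strongD: assumes "strong e" "is_mono C m" "u \<in> Arr C" "v \<in> Arr C" "Dom C u = Dom C e"
     "Cod C u = Dom C m" "Dom C v = Cod C e" "Cod C v = Cod C m" "m \<cdot> u = v \<cdot> e"
  shows "\<exists>d. d \<in> hom C (Cod C e) (Dom C m) \<and> d \<cdot> e = u \<and> m \<cdot> d = v"
  using assms unfolding strong_def by blast

lemma mono_arr: "is_mono C m \<Longrightarrow> m \<in> Arr C" unfolding is_mono_def by blast

lemma reg_strong: assumes "regular_epi C e" shows "strong e"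
proof -
  obtain p q where cq: "is_coequalizer C p q e" using assms unfolding regular_epi_def by blast
  note ep = coeqD[OF cq]
  have epi: "epi e" using coeq_epi[OF cq] .
  show ?thesis unfolding strong_def
  proof (intro conjI epi allI impI)
    fix m u v assume H: "is_mono C m \<and> u \<in> Arr C \<and> v \<in> Arr C \<and> Dom C u = Dom C e \<and>
     Cod C u = Dom C m \<and> Dom C v = Cod C e \<and> Cod C v = Cod C m \<and> m \<cdot> u = v \<cdot> e"
    have m: "m \<in> Arr C" using H mono_arr by blast
    have H1: "u \<in> Arr C" "v \<in> Arr C" "Dom C u = Dom C e" "Cod C u = Dom C m" "Dom C v = Cod C e" "Cod C v = Cod C m"
      and H2: "m \<cdot> u = v \<cdot> e" using H by auto
    have "m \<cdot> (u \<cdot> p) = (m \<cdot> u) \<cdot> p" using H1 ep m by simp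
    also have "\<dots> = v \<cdot> (e \<cdot> p)" using H1 H2 ep m by simp
    also have "\<dots> = v \<cdot> (e \<cdot> q)" using ep by simp
    also have "\<dots> = (m \<cdot> u) \<cdot> q" using H1 H2 ep m by simp
    also have "\<dots> = m \<cdot> (u \<cdot> q)" using H1 ep m by simp
    finally have "u \<cdot> p = u \<cdot> q" using monoD[of m "u \<cdot> p" "u \<cdot> q"] H H1 ep by simp
    then obtain d where d: "d \<in> hom C (Cod C e) (Cod C u)" "d \<cdot> e = u"
      using coeq_univ[OF cq H1(1)] H1 ep by auto
    have "(m \<cdot> d) \<cdot> e = v \<cdot> e" using d H1 H2 m ep by (simp add: hom_iff)
    then have "m \<cdot> d = v" using epiD[OF epi, of "m \<cdot> d" v] d H1 m ep by (simp add: hom_iff)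
    then show "\<exists>d. d \<in> hom C (Cod C e) (Dom C m) \<and> d \<cdot> e = u \<and> m \<cdot> d = v" using d H1 by auto
  qed
qed

lemma strong_comp: assumes "strong e1" "strong e2" "Cod C e1 = Dom C e2" shows "strong (e2 \<cdot> e1)"
proof -
  have epis: "epi e1" "epi e2" using assms unfolding strong_def by auto
  have a: "e1 \<in> Arr C" "e2 \<in> Arr C" using epis unfolding epi_def by auto
  show ?thesis unfolding strong_def
  proof (intro conjI epi_comp[OF epis assms(3)] allI impI)
    fix m u v assume H: "is_mono C m \<and> u \<in> Arr C \<and> v \<in> Arr C \<and> Dom C u = Dom C (e2 \<cdot> e1) \<and>
     Cod C u = Dom C m \<and> Dom C v = Cod C (e2 \<cdot> e1) \<and> Cod C v = Cod C m \<and> m \<cdot> u = v \<cdot> (e2 \<cdot> e1)"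
    have m: "m \<in> Arr C" "is_mono C m" using H mono_arr by blast+
    have H1: "u \<in> Arr C" "v \<in> Arr C" "Dom C u = Dom C e1" "Cod C u = Dom C m" "Dom C v = Cod C e2" "Cod C v = Cod C m"
      and H2: "m \<cdot> u = v \<cdot> (e2 \<cdot> e1)" using H a assms by auto
    have "m \<cdot> u = (v \<cdot> e2) \<cdot> e1" using H1 H2 a assms by simp
    then obtain d1 where d1: "d1 \<in> hom C (Cod C e1) (Dom C m)" "d1 \<cdot> e1 = u" "m \<cdot> d1 = v \<cdot> e2"
      using strongD[OF assms(1) m(2) H1(1), of "v \<cdot> e2"] H1 a assms m by auto
    then obtain d2 where d2: "d2 \<in> hom C (Cod C e2) (Dom C m)" "d2 \<cdot> e2 = d1" "m \<cdot> d2 = v"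
      using strongD[OF assms(2) m(2), of d1 v] H1 a assms m by (auto simp: hom_iff)
    have "d2 \<cdot> (e2 \<cdot> e1) = u" using d1 d2 a assms by (auto simp: hom_iff simp flip: assoc)
    then show "\<exists>d. d \<in> hom C (Cod C (e2 \<cdot> e1)) (Dom C m) \<and> d \<cdot> (e2 \<cdot> e1) = u \<and> m \<cdot> d = v"
      using d2 a assms by auto
  qed
qed


lemma eq_ext: "a \<cdot> b = c \<cdot> d \<Longrightarrow> a \<in> Arr C \<Longrightarrow> b \<in> Arr C \<Longrightarrow> c \<in> Arr C \<Longrightarrow> d \<in> Arr C \<Longrightarrow> x \<in> Arr C
  \<Longrightarrow> Cod C b = Dom C a \<Longrightarrow> Cod C d = Dom C c \<Longrightarrow> Cod C x = Dom C b \<Longrightarrow> Cod C x = Dom C d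
  \<Longrightarrow> a \<cdot> (b \<cdot> x) = c \<cdot> (d \<cdot> x)"
  by (metis assoc)

lemma image_fact: assumes f: "f \<in> Arr C"
  shows "\<exists>e m p q. is_coequalizer C p q e \<and> kernel_pair C f p q \<and> is_mono C m \<and> Cod C e = Dom C m \<and>
     m \<cdot> e = f \<and> Cod C m = Cod C f \<and> Dom C e = Dom C f"
proof -
  obtain p q where kp: "is_pullback C f f p q" using pb_ex[OF f f] by blast
  obtain e where cq: "is_coequalizer C p q e" using kpcoeq kp unfolding kernel_pair_def by blast
  note ep = coeqD[OF cq] and kpd = pbD[OF kp]
  obtain m where m: "m \<in> hom C (Cod C e) (Cod C f)" "m \<cdot> e = f"
    using coeq_univ[OF cq f] kpd by auto
  have ma: "m \<in> Arr C" "Dom C m = Cod C e" "Cod C m = Cod C f" using m by (auto simp: hom_iff)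
  have mono: "is_mono C m" unfolding is_mono_def
  proof (intro conjI ma ballI impI)
    fix g h assume g: "g \<in> Arr C" and h: "h \<in> Arr C" and
      H: "Cod C g = Dom C m \<and> Cod C h = Dom C m \<and> Dom C g = Dom C h \<and> m \<cdot> g = m \<cdot> h"
    have H1: "Cod C g = Cod C e" "Cod C h = Cod C e" "Dom C g = Dom C h" and H2: "m \<cdot> g = m \<cdot> h"
      using H ma by auto
    have re: "regular_epi C e" using cq unfolding regular_epi_def by blast
    obtain u1 v1 where c1: "regular_epi C v1" "u1 \<in> hom C (Dom C v1) (Dom C e)" "v1 \<in> hom C (Dom C v1) (Dom C g)"
      "e \<cdot> u1 = g \<cdot> v1"
      using cover_pb[OF re g] H1 by blast
    have hv1: "h \<cdot> v1 \<in> Arr C" "Cod C (h \<cdot> v1) = Cod C e" using c1 h H1 by (auto simp: hom_iff)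
    obtain u2 v2 where c2: "regular_epi C v2" "u2 \<in> hom C (Dom C v2) (Dom C e)" "v2 \<in> hom C (Dom C v2) (Dom C (h \<cdot> v1))"
      "e \<cdot> u2 = (h \<cdot> v1) \<cdot> v2"
      using cover_pb[OF re hv1] by blast
    have A: "u1 \<in> Arr C" "v1 \<in> Arr C" "u2 \<in> Arr C" "v2 \<in> Arr C" "Dom C u1 = Dom C v1" "Cod C u1 = Dom C e"
      "Cod C v1 = Dom C g" "Dom C u2 = Dom C v2" "Cod C u2 = Dom C e" "Cod C v2 = Dom C v1"
      using c1 c2 h H1 by (auto simp: hom_iff)
    have e2: "e \<cdot> u2 = h \<cdot> (v1 \<cdot> v2)" using c2(4) A h H1 by simp
    have fx: "f \<cdot> x = m \<cdot> (e \<cdot> x)" if "x \<in> Arr C" "Cod C x = Dom C e" for x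
    proof -
      have "f \<cdot> x = (m \<cdot> e) \<cdot> x" by (simp only: m(2))
      also have "\<dots> = m \<cdot> (e \<cdot> x)" using that ma ep by simp
      finally show ?thesis .
    qed
    have "f \<cdot> (u1 \<cdot> v2) = m \<cdot> (e \<cdot> (u1 \<cdot> v2))"
      using fx A by simp
    also have "\<dots> = m \<cdot> (g \<cdot> (v1 \<cdot> v2))" using eq_ext[OF c1(4)] A ep g by simp
    also have "\<dots> = m \<cdot> (h \<cdot> (v1 \<cdot> v2))" using eq_ext[OF H2] A ep g h ma H1 by simp
    also have "\<dots> = m \<cdot> (e \<cdot> u2)" using e2 by simp
    also have "\<dots> = f \<cdot> u2" using fx A by simp
    finally have fe: "f \<cdot> (u1 \<cdot> v2) = f \<cdot> u2" .
    obtain k where k: "k \<in> hom C (Dom C (u1 \<cdot> v2)) (Dom C p)" "p \<cdot> k = u1 \<cdot> v2" "q \<cdot> k = u2"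
      using pb_univ[OF kp, of "u1 \<cdot> v2" u2] fe A ep kpd by auto
    have ka: "k \<in> Arr C" "Cod C k = Dom C p" using k by (auto simp: hom_iff)
    have "g \<cdot> (v1 \<cdot> v2) = e \<cdot> (u1 \<cdot> v2)" using eq_ext[OF c1(4)] A ep g by simp
    also have "\<dots> = e \<cdot> (p \<cdot> k)" using k by simp
    also have "\<dots> = e \<cdot> (q \<cdot> k)"
      by (rule eq_ext[OF ep(7) ep(3) ep(1) ep(3) ep(2) ka(1)]) (use ep(4-6) ka(2) in auto)
    also have "\<dots> = h \<cdot> (v1 \<cdot> v2)" using k e2 by simp
    finally have gh: "g \<cdot> (v1 \<cdot> v2) = h \<cdot> (v1 \<cdot> v2)" .
    have ep12: "epi (v1 \<cdot> v2)" using epi_comp[OF regular_epi_epi[OF c2(1)] regular_epi_epi[OF c1(1)]] A by simp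
    have c12: "Cod C (v1 \<cdot> v2) = Dom C g" using A by simp
    show "g = h" by (rule epiD[OF ep12 g h _ _ _ gh]) (use c12 H1 in auto)
  qed
  show ?thesis
    apply (rule exI[of _ e], rule exI[of _ m], rule exI[of _ p], rule exI[of _ q])
    using cq kp mono ma m(2) ep(3) ep(6) kpd(7) unfolding kernel_pair_def by simp
qed

lemma strong_reg: assumes "strong g" shows "regular_epi C g"
proof -
  have epi: "epi g" using assms unfolding strong_def by blast
  have ga: "g \<in> Arr C" using epi unfolding epi_def by blast
  obtain e m p q where I: "is_coequalizer C p q e" "kernel_pair C g p q" "is_mono C m" "Cod C e = Dom C m"
     "m \<cdot> e = g" "Cod C m = Cod C g" "Dom C e = Dom C g"
    using image_fact[OF ga] by blast
  note ep = coeqD[OF I(1)] and kpd = pbD[OF I(2)[unfolded kernel_pair_def]]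
  have ma: "m \<in> Arr C" using I mono_arr by blast
  obtain d where d: "d \<in> hom C (Cod C g) (Dom C m)" "d \<cdot> g = e" "m \<cdot> d = Id C (Cod C g)"
    using strongD[OF assms I(3) ep(3), of "Id C (Cod C g)"] I ga ma cod_obj[OF ga] by auto
  have da: "d \<in> Arr C" "Dom C d = Cod C g" "Cod C d = Dom C m" using d by (auto simp: hom_iff)
  have univ: "\<forall>u\<in>Arr C. Dom C u = Cod C p \<and> u \<cdot> p = u \<cdot> q \<longrightarrow>
        (\<exists>!h. h \<in> hom C (Cod C g) (Cod C u) \<and> h \<cdot> g = u)"
  proof (intro ballI impI)
    fix u assume u: "u \<in> Arr C" and H: "Dom C u = Cod C p \<and> u \<cdot> p = u \<cdot> q"
    obtain h where h: "h \<in> hom C (Cod C e) (Cod C u)" "h \<cdot> e = u" using coeq_univ[OF I(1) u] H by auto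
    have ha: "h \<in> Arr C" "Dom C h = Cod C e" "Cod C h = Cod C u" using h by (auto simp: hom_iff)
    have "(h \<cdot> d) \<cdot> g = u" using ha da ga I h by (simp add: d(2))
    moreover have "h \<cdot> d \<in> hom C (Cod C g) (Cod C u)" using ha da I by (simp add: hom_iff)
    ultimately show "\<exists>!k. k \<in> hom C (Cod C g) (Cod C u) \<and> k \<cdot> g = u"
      using epiD[OF epi] by (auto simp: hom_iff)
  qed
  have "is_coequalizer C p q g" unfolding is_coequalizer_def
    using kpd ga univ by auto
  then show ?thesis unfolding regular_epi_def by blast
qed

lemma reg_comp: "regular_epi C e1 \<Longrightarrow> regular_epi C e2 \<Longrightarrow> Cod C e1 = Dom C e2 \<Longrightarrow> regular_epi C (e2 \<cdot> e1)"
  using strong_reg strong_comp reg_strong by blast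


lemma prod2D: assumes "is_product2 C X Y p1 p2"
  shows "p1 \<in> Arr C" "p2 \<in> Arr C" "Dom C p1 = Dom C p2" "Cod C p1 = X" "Cod C p2 = Y"
  using assms unfolding is_product2_def by auto

lemma prod2_univ: assumes "is_product2 C X Y p1 p2" "x \<in> Arr C" "y \<in> Arr C" "Dom C x = Dom C y"
    "Cod C x = X" "Cod C y = Y"
  shows "\<exists>!h. h \<in> hom C (Dom C x) (Dom C p1) \<and> p1 \<cdot> h = x \<and> p2 \<cdot> h = y"
  using assms unfolding is_product2_def by blast

lemma tuple2_prop: assumes "is_product2 C X Y p1 p2" "x \<in> Arr C" "y \<in> Arr C" "Dom C x = Dom C y"
    "Cod C x = X" "Cod C y = Y"
  shows "tuple2 C p1 p2 x y \<in> hom C (Dom C x) (Dom C p1) \<and> p1 \<cdot> tuple2 C p1 p2 x y = x \<and> p2 \<cdot> tuple2 C p1 p2 x y = y"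
  unfolding tuple2_def by (rule theI'[OF prod2_univ[OF assms]])

lemma tuple2_uniq: assumes "is_product2 C X Y p1 p2" "x \<in> Arr C" "y \<in> Arr C" "Dom C x = Dom C y"
    "Cod C x = X" "Cod C y = Y" "h \<in> hom C (Dom C x) (Dom C p1)" "p1 \<cdot> h = x" "p2 \<cdot> h = y"
  shows "tuple2 C p1 p2 x y = h"
  unfolding tuple2_def by (rule the1_equality[OF prod2_univ[OF assms(1-6)]]) (use assms in blast)

lemma prod2_ext: assumes "is_product2 C X Y p1 p2" "h1 \<in> Arr C" "h2 \<in> Arr C" "Cod C h1 = Dom C p1"
   "Cod C h2 = Dom C p1" "Dom C h1 = Dom C h2" "p1 \<cdot> h1 = p1 \<cdot> h2" "p2 \<cdot> h1 = p2 \<cdot> h2"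
  shows "h1 = h2"
proof -
  note P = prod2D[OF assms(1)]
  have "\<exists>!h. h \<in> hom C (Dom C (p1 \<cdot> h1)) (Dom C p1) \<and> p1 \<cdot> h = p1 \<cdot> h1 \<and> p2 \<cdot> h = p2 \<cdot> h1"
    by (rule prod2_univ[OF assms(1)]) (use assms P in auto)
  moreover have "h1 \<in> hom C (Dom C (p1 \<cdot> h1)) (Dom C p1)" "h2 \<in> hom C (Dom C (p1 \<cdot> h1)) (Dom C p1)"
    using assms P by (auto simp: hom_iff)
  ultimately show ?thesis using assms(7,8) by metis
qed

lemma term_ex: "\<exists>T. terminal C T" using fl unfolding has_finite_limits_def by blast

lemma prod2_ex: assumes "Y1 \<in> Obj C" "Y2 \<in> Obj C" shows "\<exists>p1 p2. is_product2 C Y1 Y2 p1 p2"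
proof -
  obtain T where T: "terminal C T" using term_ex by blast
  have tu: "\<And>A. A \<in> Obj C \<Longrightarrow> \<exists>!f. f \<in> hom C A T" using T unfolding terminal_def by blast
  obtain t1 where t1: "t1 \<in> hom C Y1 T" using tu[OF assms(1)] by blast
  obtain t2 where t2: "t2 \<in> hom C Y2 T" using tu[OF assms(2)] by blast
  have ta: "t1 \<in> Arr C" "t2 \<in> Arr C" "Cod C t1 = Cod C t2" "Dom C t1 = Y1" "Dom C t2 = Y2"
    using t1 t2 by (auto simp: hom_iff)
  obtain p q where pb: "is_pullback C t1 t2 p q" using pb_ex[OF ta(1-3)] by blast
  note P = pbD[OF pb]
  have "\<forall>x\<in>Arr C. \<forall>y\<in>Arr C. Dom C x = Dom C y \<and> Cod C x = Y1 \<and> Cod C y = Y2 \<longrightarrow>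
        (\<exists>!h. h \<in> hom C (Dom C x) (Dom C p) \<and> p \<cdot> h = x \<and> q \<cdot> h = y)"
  proof (intro ballI impI)
    fix x y assume x: "x \<in> Arr C" and y: "y \<in> Arr C" and H: "Dom C x = Dom C y \<and> Cod C x = Y1 \<and> Cod C y = Y2"
    have "t1 \<cdot> x \<in> hom C (Dom C x) T" "t2 \<cdot> y \<in> hom C (Dom C x) T" using x y H ta t1 t2 by (auto simp: hom_iff)
    moreover have "Dom C x \<in> Obj C" using dom_obj[OF x] .
    ultimately have "t1 \<cdot> x = t2 \<cdot> y" using tu by blast
    then show "\<exists>!h. h \<in> hom C (Dom C x) (Dom C p) \<and> p \<cdot> h = x \<and> q \<cdot> h = y"
      using pb_univ[OF pb x y] H ta by auto
  qed
  then have "is_product2 C Y1 Y2 p q" unfolding is_product2_def using P ta by auto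
  then show ?thesis by blast
qed

lemma prod3D: assumes "is_product3 C X Y Z p1 p2 p3"
  shows "p1 \<in> Arr C" "p2 \<in> Arr C" "p3 \<in> Arr C" "Dom C p1 = Dom C p2" "Dom C p3 = Dom C p1"
    "Cod C p1 = X" "Cod C p2 = Y" "Cod C p3 = Z"
  using assms unfolding is_product3_def by auto

lemma prod3_univ: assumes "is_product3 C X Y Z p1 p2 p3" "x \<in> Arr C" "y \<in> Arr C" "z \<in> Arr C"
    "Dom C y = Dom C x" "Dom C z = Dom C x" "Cod C x = X" "Cod C y = Y" "Cod C z = Z"
  shows "\<exists>!h. h \<in> hom C (Dom C x) (Dom C p1) \<and> p1 \<cdot> h = x \<and> p2 \<cdot> h = y \<and> p3 \<cdot> h = z"
proof -
  have U: "\<forall>x\<in>Arr C. \<forall>y\<in>Arr C. \<forall>z\<in>Arr C. Dom C x = Dom C y \<and> Dom C x = Dom C z \<and>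
        Cod C x = X \<and> Cod C y = Y \<and> Cod C z = Z \<longrightarrow>
        (\<exists>!h. h \<in> hom C (Dom C x) (Dom C p1) \<and> Comp C p1 h = x \<and> Comp C p2 h = y \<and> Comp C p3 h = z)"
    using assms(1) unfolding is_product3_def by (elim conjE)
  have "Dom C x = Dom C y \<and> Dom C x = Dom C z \<and> Cod C x = X \<and> Cod C y = Y \<and> Cod C z = Z"
    using assms(5-9) by simp
  then show ?thesis using U assms(2-4) by blast
qed

lemma tuple3_prop: assumes "is_product3 C X Y Z p1 p2 p3" "x \<in> Arr C" "y \<in> Arr C" "z \<in> Arr C"
    "Dom C y = Dom C x" "Dom C z = Dom C x" "Cod C x = X" "Cod C y = Y" "Cod C z = Z"
  shows "tuple3 C p1 p2 p3 x y z \<in> hom C (Dom C x) (Dom C p1) \<and> p1 \<cdot> tuple3 C p1 p2 p3 x y z = x \<and>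
     p2 \<cdot> tuple3 C p1 p2 p3 x y z = y \<and> p3 \<cdot> tuple3 C p1 p2 p3 x y z = z"
  unfolding tuple3_def by (rule theI'[OF prod3_univ[OF assms]])

lemma tuple3_uniq: assumes "is_product3 C X Y Z p1 p2 p3" "x \<in> Arr C" "y \<in> Arr C" "z \<in> Arr C"
    "Dom C y = Dom C x" "Dom C z = Dom C x" "Cod C x = X" "Cod C y = Y" "Cod C z = Z"
    "h \<in> hom C (Dom C x) (Dom C p1)" "p1 \<cdot> h = x" "p2 \<cdot> h = y" "p3 \<cdot> h = z"
  shows "tuple3 C p1 p2 p3 x y z = h"
  unfolding tuple3_def by (rule the1_equality[OF prod3_univ[OF assms(1-9)]]) (use assms in blast)

lemma prod3_ex: assumes "Y1 \<in> Obj C" "Y2 \<in> Obj C" "Y3 \<in> Obj C"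
  shows "\<exists>p1 p2 p3. is_product3 C Y1 Y2 Y3 p1 p2 p3"
proof -
  obtain a1 a2 where A: "is_product2 C Y1 Y2 a1 a2" using prod2_ex assms by blast
  note AD = prod2D[OF A]
  obtain r1 r2 where R: "is_product2 C (Dom C a1) Y3 r1 r2" using prod2_ex assms dom_obj AD by blast
  note RD = prod2D[OF R]
  have univ: "\<forall>x\<in>Arr C. \<forall>y\<in>Arr C. \<forall>z\<in>Arr C. Dom C x = Dom C y \<and> Dom C x = Dom C z \<and>
        Cod C x = Y1 \<and> Cod C y = Y2 \<and> Cod C z = Y3 \<longrightarrow>
        (\<exists>!h. h \<in> hom C (Dom C x) (Dom C (a1 \<cdot> r1)) \<and> (a1 \<cdot> r1) \<cdot> h = x \<and> (a2 \<cdot> r1) \<cdot> h = y \<and> r2 \<cdot> h = z)"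
  proof (intro ballI impI)
    fix x y z assume x: "x \<in> Arr C" and y: "y \<in> Arr C" and z: "z \<in> Arr C" and
      H: "Dom C x = Dom C y \<and> Dom C x = Dom C z \<and> Cod C x = Y1 \<and> Cod C y = Y2 \<and> Cod C z = Y3"
    define h12 where "h12 = tuple2 C a1 a2 x y"
    have h12: "h12 \<in> hom C (Dom C x) (Dom C a1)" "a1 \<cdot> h12 = x" "a2 \<cdot> h12 = y"
      using tuple2_prop[OF A x y] H unfolding h12_def by auto
    have h12a: "h12 \<in> Arr C" "Dom C h12 = Dom C x" "Cod C h12 = Dom C a1" using h12 by (auto simp: hom_iff)
    define h where "h = tuple2 C r1 r2 h12 z"
    have h: "h \<in> hom C (Dom C x) (Dom C r1)" "r1 \<cdot> h = h12" "r2 \<cdot> h = z"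
      using tuple2_prop[OF R h12a(1) z] H h12a unfolding h_def by auto
    have ha: "h \<in> Arr C" "Dom C h = Dom C x" "Cod C h = Dom C r1" using h by (auto simp: hom_iff)
    have ex: "h \<in> hom C (Dom C x) (Dom C (a1 \<cdot> r1)) \<and> (a1 \<cdot> r1) \<cdot> h = x \<and> (a2 \<cdot> r1) \<cdot> h = y \<and> r2 \<cdot> h = z"
      using h h12 ha AD RD by (auto simp: hom_iff)
    have un: "k = h" if k: "k \<in> hom C (Dom C x) (Dom C (a1 \<cdot> r1))" "(a1 \<cdot> r1) \<cdot> k = x"
      "(a2 \<cdot> r1) \<cdot> k = y" "r2 \<cdot> k = z" for k
    proof -
      have ka: "k \<in> Arr C" "Dom C k = Dom C x" "Cod C k = Dom C r1" using k AD RD by (auto simp: hom_iff)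
      have "a1 \<cdot> (r1 \<cdot> k) = x" "a2 \<cdot> (r1 \<cdot> k) = y" using k(2,3) ka AD RD by auto
      then have "r1 \<cdot> k = h12"
        using prod2_ext[OF A, of "r1 \<cdot> k" h12] ka AD RD h12 h12a by auto
      then have "r1 \<cdot> k = r1 \<cdot> h" using h by simp
      then show "k = h" using prod2_ext[OF R, of k h] ka ha k(4) h(3) by auto
    qed
    show "\<exists>!h. h \<in> hom C (Dom C x) (Dom C (a1 \<cdot> r1)) \<and> (a1 \<cdot> r1) \<cdot> h = x \<and> (a2 \<cdot> r1) \<cdot> h = y \<and> r2 \<cdot> h = z"
      using ex un by blast
  qed
  have "is_product3 C Y1 Y2 Y3 (a1 \<cdot> r1) (a2 \<cdot> r1) r2" unfolding is_product3_def
    using univ AD RD by auto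
  then show ?thesis by blast
qed


lemma assoc_eq: "a \<cdot> b = c \<Longrightarrow> a \<in> Arr C \<Longrightarrow> b \<in> Arr C \<Longrightarrow> x \<in> Arr C \<Longrightarrow> Cod C b = Dom C a
   \<Longrightarrow> Cod C x = Dom C b \<Longrightarrow> a \<cdot> (b \<cdot> x) = c \<cdot> x"
proof -
  assume h: "a \<cdot> b = c" "a \<in> Arr C" "b \<in> Arr C" "x \<in> Arr C" "Cod C b = Dom C a" "Cod C x = Dom C b"
  have "a \<cdot> (b \<cdot> x) = (a \<cdot> b) \<cdot> x" using h(2-6) by simp
  then show ?thesis by (simp only: h(1))
qed

lemma majD: assumes "majority_category C" "is_product3 C X Y Z p1 p2 p3" "is_mono C m" "Cod C m = Dom C p1"
  "S \<in> Obj C" "x \<in> hom C S X" "x' \<in> hom C S X" "y \<in> hom C S Y" "y' \<in> hom C S Y" "z \<in> hom C S Z" "z' \<in> hom C S Z"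
  "gmem C (tuple3 C p1 p2 p3 x y z') m" "gmem C (tuple3 C p1 p2 p3 x y' z) m" "gmem C (tuple3 C p1 p2 p3 x' y z) m"
  shows "gmem C (tuple3 C p1 p2 p3 x y z) m"
proof -
  note P = prod3D[OF assms(2)]
  have O: "X \<in> Obj C" "Y \<in> Obj C" "Z \<in> Obj C" using P cod_obj by metis+
  have "majority_selecting C X Y Z p1 p2 p3 m" using assms(1-4) O unfolding majority_category_def by blast
  then show ?thesis using assms(5-14) unfolding majority_selecting_def by blast
qed

definition sol where
  "sol X S I f c Q \<alpha> b \<longleftrightarrow> regular_epi C \<alpha> \<and> \<alpha> \<in> hom C Q S \<and> b \<in> hom C Q X \<and> (\<forall>i\<in>I. f i \<cdot> b = c i \<cdot> \<alpha>)"

definition asol where "asol X S I f c \<longleftrightarrow> (\<exists>Q \<alpha> b. sol X S I f c Q \<alpha> b)"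

definition wt where "wt X S I f c \<longleftrightarrow> (\<forall>i\<in>I. f i \<in> Arr C \<and> Dom C (f i) = X \<and> c i \<in> hom C S (Cod C (f i)))"

lemma asol_mono: "asol X S I f c \<Longrightarrow> J \<subseteq> I \<Longrightarrow> asol X S J f c"
  unfolding asol_def sol_def by blast

lemma sol_pull: assumes "sol X S I f c Q \<alpha> b" "\<delta> \<in> hom C Q' Q" "regular_epi C \<alpha>'" "\<alpha> \<cdot> \<delta> = \<alpha>'"
  "wt X S I f c"
  shows "sol X S I f c Q' \<alpha>' (b \<cdot> \<delta>)"
proof -
  have A: "\<alpha> \<in> Arr C" "Dom C \<alpha> = Q" "Cod C \<alpha> = S" "b \<in> Arr C" "Dom C b = Q" "Cod C b = X"
    "\<delta> \<in> Arr C" "Dom C \<delta> = Q'" "Cod C \<delta> = Q"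
    using assms(1,2) unfolding sol_def by (auto simp: hom_iff)
  have "\<alpha>' \<in> hom C Q' S" using A by (simp add: hom_iff flip: assms(4))
  moreover have "b \<cdot> \<delta> \<in> hom C Q' X" using A by (simp add: hom_iff)
  moreover have "f i \<cdot> (b \<cdot> \<delta>) = c i \<cdot> \<alpha>'" if i: "i \<in> I" for i
  proof -
    have fi: "f i \<in> Arr C" "Dom C (f i) = X" "c i \<in> Arr C" "Dom C (c i) = S"
      using assms(5) i unfolding wt_def by (auto simp: hom_iff)
    have e: "f i \<cdot> b = c i \<cdot> \<alpha>" using assms(1) i unfolding sol_def by blast
    have "f i \<cdot> (b \<cdot> \<delta>) = (c i \<cdot> \<alpha>) \<cdot> \<delta>" using assoc_eq[OF e] fi A by simp
    also have "\<dots> = c i \<cdot> (\<alpha> \<cdot> \<delta>)" using fi A by simp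
    finally show ?thesis using assms(4) by simp
  qed
  ultimately show ?thesis using assms(3) unfolding sol_def by blast
qed

lemma common_cover: assumes "regular_epi C \<alpha>1" "\<alpha>1 \<in> hom C Q1 S" "regular_epi C \<alpha>2" "\<alpha>2 \<in> hom C Q2 S"
  shows "\<exists>Q \<delta>1 \<delta>2. \<delta>1 \<in> hom C Q Q1 \<and> \<delta>2 \<in> hom C Q Q2 \<and> \<alpha>1 \<cdot> \<delta>1 = \<alpha>2 \<cdot> \<delta>2 \<and> regular_epi C (\<alpha>2 \<cdot> \<delta>2)"
proof -
  have A: "\<alpha>1 \<in> Arr C" "\<alpha>2 \<in> Arr C" "Cod C \<alpha>1 = Cod C \<alpha>2" using assms by (auto simp: hom_iff)
  obtain p q where pb: "is_pullback C \<alpha>1 \<alpha>2 p q" using pb_ex[OF A] by blast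
  note P = pbD[OF pb]
  have rq: "regular_epi C q" using pbstab[OF assms(1) pb] .
  have "regular_epi C (\<alpha>2 \<cdot> q)" using reg_comp[OF rq assms(3)] P by simp
  moreover have "p \<in> hom C (Dom C p) Q1" "q \<in> hom C (Dom C p) Q2" using P assms by (auto simp: hom_iff)
  ultimately show ?thesis using P(9) by blast
qed


lemma solD: assumes "sol X S I f c Q \<alpha> b"
  shows "regular_epi C \<alpha>" "\<alpha> \<in> Arr C" "Dom C \<alpha> = Q" "Cod C \<alpha> = S" "b \<in> Arr C" "Dom C b = Q" "Cod C b = X"
    "\<And>i. i \<in> I \<Longrightarrow> f i \<cdot> b = c i \<cdot> \<alpha>"
  using assms unfolding sol_def by (auto simp: hom_iff)

lemma three: assumes maj: "majority_category C" and wt: "wt X S {i,j,k} f c"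
  and s1: "asol X S {i,j} f c" and s2: "asol X S {i,k} f c" and s3: "asol X S {j,k} f c"
  shows "asol X S {i,j,k} f c"
proof -
  obtain Q1 a1 b1 where S1: "sol X S {i,j} f c Q1 a1 b1" using s1 unfolding asol_def by blast
  obtain Q2 a2 b2 where S2: "sol X S {i,k} f c Q2 a2 b2" using s2 unfolding asol_def by blast
  obtain Q3 a3 b3 where S3: "sol X S {j,k} f c Q3 a3 b3" using s3 unfolding asol_def by blast
  have wt1: "wt X S {i,j} f c" "wt X S {i,k} f c" "wt X S {j,k} f c" using wt unfolding wt_def by auto
  obtain R d1 d2 where R: "d1 \<in> hom C R Q1" "d2 \<in> hom C R Q2" "a1 \<cdot> d1 = a2 \<cdot> d2" "regular_epi C (a2 \<cdot> d2)"
    using common_cover[of a1 Q1 S a2 Q2] S1 S2 unfolding sol_def by blast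
  define g1 where "g1 = a2 \<cdot> d2"
  have g1: "g1 \<in> hom C R S" using R S2 unfolding g1_def sol_def by (auto simp: hom_iff)
  obtain Q e1 e2 where Qc: "e1 \<in> hom C Q R" "e2 \<in> hom C Q Q3" "g1 \<cdot> e1 = a3 \<cdot> e2" "regular_epi C (a3 \<cdot> e2)"
    using common_cover[of g1 R S a3 Q3] R S3 g1 unfolding sol_def g1_def by blast
  define \<gamma> where "\<gamma> = a3 \<cdot> e2"
  have S1': "sol X S {i,j} f c R g1 (b1 \<cdot> d1)" using sol_pull[OF S1 R(1) R(4) R(3) wt1(1)] unfolding g1_def .
  have S2': "sol X S {i,k} f c R g1 (b2 \<cdot> d2)" using sol_pull[OF S2 R(2) R(4) refl wt1(2)] unfolding g1_def .
  have S1'': "sol X S {i,j} f c Q \<gamma> ((b1 \<cdot> d1) \<cdot> e1)" using sol_pull[OF S1' Qc(1) Qc(4) Qc(3) wt1(1)] unfolding \<gamma>_def .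
  have S2'': "sol X S {i,k} f c Q \<gamma> ((b2 \<cdot> d2) \<cdot> e1)" using sol_pull[OF S2' Qc(1) Qc(4) Qc(3) wt1(2)] unfolding \<gamma>_def .
  have S3'': "sol X S {j,k} f c Q \<gamma> (b3 \<cdot> e2)" using sol_pull[OF S3 Qc(2) Qc(4) refl wt1(3)] unfolding \<gamma>_def .
  define bij where "bij = (b1 \<cdot> d1) \<cdot> e1"
  define bik where "bik = (b2 \<cdot> d2) \<cdot> e1"
  define bjk where "bjk = b3 \<cdot> e2"
  note T1 = solD[OF S1''[folded bij_def]] and T2 = solD[OF S2''[folded bik_def]] and T3 = solD[OF S3''[folded bjk_def]]
  have F: "f l \<in> Arr C" "Dom C (f l) = X" "c l \<in> Arr C" "Dom C (c l) = S" "Cod C (c l) = Cod C (f l)"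
    if "l \<in> {i,j,k}" for l using wt that unfolding wt_def by (auto simp: hom_iff)
  have Fi: "f i \<in> Arr C" "Dom C (f i) = X" "c i \<in> Arr C" "Dom C (c i) = S" "Cod C (c i) = Cod C (f i)"
    and Fj: "f j \<in> Arr C" "Dom C (f j) = X" "c j \<in> Arr C" "Dom C (c j) = S" "Cod C (c j) = Cod C (f j)"
    and Fk: "f k \<in> Arr C" "Dom C (f k) = X" "c k \<in> Arr C" "Dom C (c k) = S" "Cod C (c k) = Cod C (f k)"
    using F by auto
  obtain p1 p2 p3 where P: "is_product3 C (Cod C (f i)) (Cod C (f j)) (Cod C (f k)) p1 p2 p3"
    using prod3_ex cod_obj Fi Fj Fk by metis
  note PD = prod3D[OF P]
  define FF where "FF = tuple3 C p1 p2 p3 (f i) (f j) (f k)"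
  have FF: "FF \<in> hom C X (Dom C p1)" "p1 \<cdot> FF = f i" "p2 \<cdot> FF = f j" "p3 \<cdot> FF = f k"
    using tuple3_prop[OF P Fi(1) Fj(1) Fk(1)] Fi Fj Fk unfolding FF_def by auto
  have FFa: "FF \<in> Arr C" "Dom C FF = X" "Cod C FF = Dom C p1" using FF(1) by (auto simp: hom_iff)
  obtain e m pp qq where I: "is_coequalizer C pp qq e" "is_mono C m" "Cod C e = Dom C m"
     "m \<cdot> e = FF" "Cod C m = Cod C FF" "Dom C e = Dom C FF"
    using image_fact[OF FFa(1)] by blast
  have ma: "m \<in> Arr C" using mono_arr I by blast
  have ea: "e \<in> Arr C" using coeqD(3)[OF I(1)] .
  have re: "regular_epi C e" using I(1) unfolding regular_epi_def by blast
  have gm: "gmem C (FF \<cdot> b) m" if b: "b \<in> Arr C" "Cod C b = X" for b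
    unfolding gmem_def
  proof
    show "e \<cdot> b \<in> hom C (Dom C (FF \<cdot> b)) (Dom C m)" using b FFa I ea by (auto simp: hom_iff)
    show "m \<cdot> (e \<cdot> b) = FF \<cdot> b" using assoc_eq[OF I(4) ma ea b(1)] b FFa I by simp
  qed
  have Qo: "Q \<in> Obj C" using T1(2,3) dom_obj by metis
  define x where "x = c i \<cdot> \<gamma>"
  define y where "y = c j \<cdot> \<gamma>"
  define z where "z = c k \<cdot> \<gamma>"
  have xyz: "x \<in> hom C Q (Cod C (f i))" "y \<in> hom C Q (Cod C (f j))" "z \<in> hom C Q (Cod C (f k))"
    unfolding x_def y_def z_def using Fi Fj Fk T1 by (auto simp: hom_iff)
  have xyz': "f i \<cdot> bjk \<in> hom C Q (Cod C (f i))" "f j \<cdot> bik \<in> hom C Q (Cod C (f j))" "f k \<cdot> bij \<in> hom C Q (Cod C (f k))"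
    using Fi Fj Fk T1 T2 T3 by (auto simp: hom_iff)
  have tup: "tuple3 C p1 p2 p3 u v w = FF \<cdot> b" if b: "b \<in> Arr C" "Cod C b = X" "Dom C b = Q"
    and u: "u \<in> hom C Q (Cod C (f i))" and v: "v \<in> hom C Q (Cod C (f j))" and w: "w \<in> hom C Q (Cod C (f k))"
    and eqs: "f i \<cdot> b = u" "f j \<cdot> b = v" "f k \<cdot> b = w" for b u v w
  proof (rule tuple3_uniq[OF P])
    show "u \<in> Arr C" "v \<in> Arr C" "w \<in> Arr C" "Dom C v = Dom C u" "Dom C w = Dom C u"
      "Cod C u = Cod C (f i)" "Cod C v = Cod C (f j)" "Cod C w = Cod C (f k)" using u v w by (auto simp: hom_iff)
    show "FF \<cdot> b \<in> hom C (Dom C u) (Dom C p1)" using b u FFa by (auto simp: hom_iff)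
    show "p1 \<cdot> (FF \<cdot> b) = u" using assoc_eq[OF FF(2)] PD FFa b eqs by simp
    show "p2 \<cdot> (FF \<cdot> b) = v" using assoc_eq[OF FF(3)] PD FFa b eqs by simp
    show "p3 \<cdot> (FF \<cdot> b) = w" using assoc_eq[OF FF(4)] PD FFa b eqs by simp
  qed
  have m1: "gmem C (tuple3 C p1 p2 p3 x y (f k \<cdot> bij)) m"
    using tup[OF T1(5,7,6) xyz(1,2) xyz'(3)] T1(8)[of i] T1(8)[of j] gm[OF T1(5,7)] unfolding x_def y_def by simp
  have m2: "gmem C (tuple3 C p1 p2 p3 x (f j \<cdot> bik) z) m"
    using tup[OF T2(5,7,6) xyz(1) xyz'(2) xyz(3)] T2(8)[of i] T2(8)[of k] gm[OF T2(5,7)] unfolding x_def z_def by simp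
  have m3: "gmem C (tuple3 C p1 p2 p3 (f i \<cdot> bjk) y z) m"
    using tup[OF T3(5,7,6) xyz'(1) xyz(2,3)] T3(8)[of j] T3(8)[of k] gm[OF T3(5,7)] unfolding y_def z_def by simp
  have "gmem C (tuple3 C p1 p2 p3 x y z) m"
    by (rule majD[OF maj P I(2) _ Qo xyz(1) xyz'(1) xyz(2) xyz'(2) xyz(3) xyz'(3) m1 m2 m3]) (use I FFa in simp)
  then obtain s where s: "s \<in> hom C Q (Dom C m)" "m \<cdot> s = tuple3 C p1 p2 p3 x y z"
    unfolding gmem_def using tuple3_prop[OF P] xyz by (auto simp: hom_iff)
  define TT where "TT = tuple3 C p1 p2 p3 x y z"
  have TT: "TT \<in> hom C Q (Dom C p1)" "p1 \<cdot> TT = x" "p2 \<cdot> TT = y" "p3 \<cdot> TT = z"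
    using tuple3_prop[OF P] xyz unfolding TT_def by (auto simp: hom_iff)
  have sa: "s \<in> Arr C" "Dom C s = Q" "Cod C s = Dom C m" using s by (auto simp: hom_iff)
  obtain u v where uv: "regular_epi C v" "u \<in> hom C (Dom C v) (Dom C e)" "v \<in> hom C (Dom C v) (Dom C s)" "e \<cdot> u = s \<cdot> v"
    using cover_pb[OF re sa(1)] sa I by auto
  have ua: "u \<in> Arr C" "Dom C u = Dom C v" "Cod C u = X" "v \<in> Arr C" "Cod C v = Q"
    using uv FFa I sa by (auto simp: hom_iff)
  have "FF \<cdot> u = m \<cdot> (e \<cdot> u)" using assoc_eq[OF I(4) ma ea ua(1)] ua FFa I by simp
  also have "\<dots> = m \<cdot> (s \<cdot> v)" using uv(4) by simp
  also have "\<dots> = TT \<cdot> v" using assoc_eq[OF s(2)[folded TT_def] ma sa(1) ua(4)] sa ua by simp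
  finally have Fu: "FF \<cdot> u = TT \<cdot> v" .
  have TTa: "TT \<in> Arr C" "Dom C TT = Q" "Cod C TT = Dom C p1" using TT by (auto simp: hom_iff)
  have ga: "\<gamma> \<in> Arr C" "Cod C \<gamma> = S" "Dom C \<gamma> = Q" using T1 by auto
  have comp_l: "f l \<cdot> u = c l \<cdot> (\<gamma> \<cdot> v)" if pl: "pl \<cdot> FF = f l" "pl \<cdot> TT = c l \<cdot> \<gamma>" "pl \<in> Arr C"
     "Dom C pl = Dom C p1" and cl: "c l \<in> Arr C" "Dom C (c l) = S" for pl l
  proof -
    have "f l \<cdot> u = pl \<cdot> (FF \<cdot> u)" using assoc_eq[OF pl(1) pl(3) FFa(1) ua(1)] pl FFa ua by simp
    also have "\<dots> = pl \<cdot> (TT \<cdot> v)" using Fu by simp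
    also have "\<dots> = (c l \<cdot> \<gamma>) \<cdot> v" using assoc_eq[OF pl(2) pl(3) TTa(1) ua(4)] pl TTa ua by simp
    also have "\<dots> = c l \<cdot> (\<gamma> \<cdot> v)" using cl ga ua by simp
    finally show ?thesis .
  qed
  have "sol X S {i,j,k} f c (Dom C v) (\<gamma> \<cdot> v) u"
    unfolding sol_def
  proof (intro conjI ballI)
    show "regular_epi C (\<gamma> \<cdot> v)" using reg_comp[OF uv(1) T1(1)] ua ga by simp
    show "\<gamma> \<cdot> v \<in> hom C (Dom C v) S" using ua ga by (simp add: hom_iff)
    show "u \<in> hom C (Dom C v) X" using ua by (simp add: hom_iff)
    fix l assume "l \<in> {i,j,k}"
    then consider "l = i" | "l = j" | "l = k" by blast
    then show "f l \<cdot> u = c l \<cdot> (\<gamma> \<cdot> v)"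
    proof cases
      case 1 show ?thesis unfolding 1 by (rule comp_l[OF FF(2) TT(2)[unfolded x_def] PD(1) refl Fi(3,4)])
    next
      case 2 show ?thesis unfolding 2 by (rule comp_l[OF FF(3) TT(3)[unfolded y_def] PD(2) PD(4)[symmetric] Fj(3,4)])
    next
      case 3 show ?thesis unfolding 3 by (rule comp_l[OF FF(4) TT(4)[unfolded z_def] PD(3) PD(5) Fk(3,4)])
    qed
  qed
  then show ?thesis unfolding asol_def by blast
qed


lemma merge_eq: assumes P: "is_product2 C Yi Yj q1 q2" and fi: "fi \<in> hom C X Yi" and fj: "fj \<in> hom C X Yj"
  and ci: "ci \<in> hom C S Yi" and cj: "cj \<in> hom C S Yj" and a: "\<alpha> \<in> hom C Q S" and b: "b \<in> hom C Q X"
  shows "tuple2 C q1 q2 fi fj \<cdot> b = tuple2 C q1 q2 ci cj \<cdot> \<alpha> \<longleftrightarrow> fi \<cdot> b = ci \<cdot> \<alpha> \<and> fj \<cdot> b = cj \<cdot> \<alpha>"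
proof -
  note PD = prod2D[OF P]
  have A: "fi \<in> Arr C" "Dom C fi = X" "Cod C fi = Yi" "fj \<in> Arr C" "Dom C fj = X" "Cod C fj = Yj"
    "ci \<in> Arr C" "Dom C ci = S" "Cod C ci = Yi" "cj \<in> Arr C" "Dom C cj = S" "Cod C cj = Yj"
    "\<alpha> \<in> Arr C" "Dom C \<alpha> = Q" "Cod C \<alpha> = S" "b \<in> Arr C" "Dom C b = Q" "Cod C b = X"
    using assms by (auto simp: hom_iff)
  define F where "F = tuple2 C q1 q2 fi fj"
  define G where "G = tuple2 C q1 q2 ci cj"
  have F: "F \<in> hom C X (Dom C q1)" "q1 \<cdot> F = fi" "q2 \<cdot> F = fj"
    using tuple2_prop[OF P A(1) A(4)] A unfolding F_def by auto
  have G: "G \<in> hom C S (Dom C q1)" "q1 \<cdot> G = ci" "q2 \<cdot> G = cj"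
    using tuple2_prop[OF P A(7) A(10)] A unfolding G_def by auto
  have FA: "F \<in> Arr C" "Dom C F = X" "Cod C F = Dom C q1" "G \<in> Arr C" "Dom C G = S" "Cod C G = Dom C q1"
    using F G by (auto simp: hom_iff)
  have e1: "q1 \<cdot> (F \<cdot> b) = fi \<cdot> b" using assoc_eq[OF F(2) PD(1) FA(1) A(16)] FA A by simp
  have e2: "q2 \<cdot> (F \<cdot> b) = fj \<cdot> b" using assoc_eq[OF F(3) PD(2) FA(1) A(16)] FA A PD by simp
  have e3: "q1 \<cdot> (G \<cdot> \<alpha>) = ci \<cdot> \<alpha>" using assoc_eq[OF G(2) PD(1) FA(4) A(13)] FA A by simp
  have e4: "q2 \<cdot> (G \<cdot> \<alpha>) = cj \<cdot> \<alpha>" using assoc_eq[OF G(3) PD(2) FA(4) A(13)] FA A PD by simp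
  show ?thesis unfolding F_def[symmetric] G_def[symmetric]
  proof
    assume "F \<cdot> b = G \<cdot> \<alpha>"
    then show "fi \<cdot> b = ci \<cdot> \<alpha> \<and> fj \<cdot> b = cj \<cdot> \<alpha>" using e1 e2 e3 e4 by metis
  next
    assume "fi \<cdot> b = ci \<cdot> \<alpha> \<and> fj \<cdot> b = cj \<cdot> \<alpha>"
    then have "q1 \<cdot> (F \<cdot> b) = q1 \<cdot> (G \<cdot> \<alpha>)" "q2 \<cdot> (F \<cdot> b) = q2 \<cdot> (G \<cdot> \<alpha>)" using e1 e2 e3 e4 by auto
    then show "F \<cdot> b = G \<cdot> \<alpha>" by (rule prod2_ext[OF P, rotated 5]) (use FA A in auto)
  qed
qed

lemma main: assumes maj: "majority_category C"
  shows "finite I \<Longrightarrow> I \<noteq> {} \<Longrightarrow> wt X S I f c \<Longrightarrow> (\<forall>i\<in>I. \<forall>j\<in>I. asol X S {i,j} f c) \<Longrightarrow> asol X S I f c"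
proof (induction "card I" arbitrary: I f c rule: less_induct)
  case less
  show ?case
  proof (cases "card I = 1")
    case True
    then obtain i where "I = {i}" using card_1_singletonE by blast
    then show ?thesis using less.prems(4) by auto
  next
    case False
    then have "card I \<ge> 2" proof -
      have "card I > 0" using less.prems(1,2) by (simp add: card_gt_0_iff)
      then show ?thesis using False by linarith
    qed
    then obtain i j where ij: "i \<in> I" "j \<in> I" "i \<noteq> j"
      using less.prems(1) by (metis One_nat_def card.empty card_le_Suc0_iff_eq not_less_eq_eq numeral_2_eq_2 zero_le)
    have fi: "f i \<in> hom C X (Cod C (f i))" "c i \<in> hom C S (Cod C (f i))"
     and fj: "f j \<in> hom C X (Cod C (f j))" "c j \<in> hom C S (Cod C (f j))"
      using less.prems(3) ij unfolding wt_def by (auto simp: hom_iff)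
    obtain q1 q2 where P: "is_product2 C (Cod C (f i)) (Cod C (f j)) q1 q2"
      using prod2_ex cod_obj fi fj by (metis hom_iff)
    note PD = prod2D[OF P]
    define f' where "f' = f(i := tuple2 C q1 q2 (f i) (f j))"
    define c' where "c' = c(i := tuple2 C q1 q2 (c i) (c j))"
    have mi: "f' i \<cdot> b = c' i \<cdot> \<alpha> \<longleftrightarrow> f i \<cdot> b = c i \<cdot> \<alpha> \<and> f j \<cdot> b = c j \<cdot> \<alpha>"
      if "\<alpha> \<in> hom C Q S" "b \<in> hom C Q X" for Q \<alpha> b
      unfolding f'_def c'_def using merge_eq[OF P fi(1) fj(1) fi(2) fj(2) that] by simp
    have other: "f' l = f l" "c' l = c l" if "l \<noteq> i" for l using that unfolding f'_def c'_def by auto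
    have wt': "wt X S (I - {j}) f' c'"
    proof -
      have "f' i \<in> hom C X (Dom C q1)" "c' i \<in> hom C S (Dom C q1)"
        using tuple2_prop[OF P] fi fj unfolding f'_def c'_def by (auto simp: hom_iff)
      then show ?thesis unfolding wt_def
      proof (intro ballI)
        fix l assume l: "l \<in> I - {j}"
        show "f' l \<in> Arr C \<and> Dom C (f' l) = X \<and> c' l \<in> hom C S (Cod C (f' l))"
        proof (cases "l = i")
          case True
          then show ?thesis using \<open>f' i \<in> hom C X (Dom C q1)\<close> \<open>c' i \<in> hom C S (Dom C q1)\<close>
            by (auto simp: hom_iff)
        next
          case False
          then show ?thesis using less.prems(3) other[OF False] l unfolding wt_def by auto
        qed
      qed
    qed
    have fwd: "asol X S K' f' c'" if K: "asol X S K f c" "K' \<subseteq> K" "i \<in> K' \<Longrightarrow> j \<in> K" for K K'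
    proof -
      obtain Q \<alpha> b where s: "sol X S K f c Q \<alpha> b" using K(1) unfolding asol_def by blast
      have "sol X S K' f' c' Q \<alpha> b" unfolding sol_def
      proof (intro conjI ballI)
        show "regular_epi C \<alpha>" "\<alpha> \<in> hom C Q S" "b \<in> hom C Q X" using s unfolding sol_def by auto
        fix l assume l: "l \<in> K'"
        show "f' l \<cdot> b = c' l \<cdot> \<alpha>"
        proof (cases "l = i")
          case True
          then show ?thesis using mi[of \<alpha> Q b] s K l unfolding sol_def by auto
        next
          case False
          then show ?thesis using other[OF False] s K l unfolding sol_def by auto
        qed
      qed
      then show ?thesis unfolding asol_def by blast
    qed
    have bwd: "asol X S I f c" if as: "asol X S (I - {j}) f' c'"
    proof -
      obtain Q \<alpha> b where s: "sol X S (I - {j}) f' c' Q \<alpha> b" using as unfolding asol_def by blast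
      have "sol X S I f c Q \<alpha> b" unfolding sol_def
      proof (intro conjI ballI)
        show "regular_epi C \<alpha>" "\<alpha> \<in> hom C Q S" "b \<in> hom C Q X" using s unfolding sol_def by auto
        fix l assume l: "l \<in> I"
        have si: "f i \<cdot> b = c i \<cdot> \<alpha> \<and> f j \<cdot> b = c j \<cdot> \<alpha>"
          using mi[of \<alpha> Q b] s ij unfolding sol_def by auto
        show "f l \<cdot> b = c l \<cdot> \<alpha>"
        proof (cases "l = i \<or> l = j")
          case True
          then show ?thesis using si by auto
        next
          case False
          then have "f' l \<cdot> b = c' l \<cdot> \<alpha>" using s l unfolding sol_def by auto
          then show ?thesis using other[of l] False by simp
        qed
      qed
      then show ?thesis unfolding asol_def by blast
    qed
    have pw: "\<forall>l\<in>I - {j}. \<forall>l'\<in>I - {j}. asol X S {l,l'} f' c'"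
    proof (intro ballI)
      fix l l' assume l: "l \<in> I - {j}" and l': "l' \<in> I - {j}"
      have three': "asol X S {i,j,l''} f c" if "l'' \<in> I" for l''
      proof (rule three[OF maj])
        show "wt X S {i,j,l''} f c" using less.prems(3) ij that unfolding wt_def by auto
        show "asol X S {i,j} f c" "asol X S {i,l''} f c" "asol X S {j,l''} f c"
          using less.prems(4) ij that by auto
      qed
      show "asol X S {l,l'} f' c'"
      proof (cases "l = i \<or> l' = i")
        case True
        then show ?thesis
        proof
          assume "l = i" then show ?thesis using fwd[OF three'[of l']] l l' by auto
        next
          assume "l' = i" then show ?thesis using fwd[OF three'[of l]] l l' by auto
        qed
      next
        case False
        then show ?thesis using fwd[of "{l,l'}" "{l,l'}"] less.prems(4) l l' by auto
      qed
    qed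
    have "card (I - {j}) < card I" using less.prems(1) ij(2) by (rule card_Diff1_less)
    then have "asol X S (I - {j}) f' c'"
      using less.hyps[of "I - {j}" f' c'] less.prems(1) ij wt' pw by auto
    then show ?thesis using bwd by blast
  qed
qed


lemma assoc3: "q \<in> Arr C \<Longrightarrow> t \<in> Arr C \<Longrightarrow> i \<in> Arr C \<Longrightarrow> x \<in> Arr C \<Longrightarrow> Cod C t = Dom C q \<Longrightarrow>
  Cod C i = Dom C t \<Longrightarrow> Cod C x = Dom C i \<Longrightarrow> q \<cdot> (t \<cdot> i) = p \<Longrightarrow> p \<cdot> x = q \<cdot> (t \<cdot> (i \<cdot> x))"
proof -
  assume h: "q \<in> Arr C" "t \<in> Arr C" "i \<in> Arr C" "x \<in> Arr C" "Cod C t = Dom C q"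
    "Cod C i = Dom C t" "Cod C x = Dom C i" "q \<cdot> (t \<cdot> i) = p"
  have "(q \<cdot> (t \<cdot> i)) \<cdot> x = q \<cdot> (t \<cdot> (i \<cdot> x))" using h(1-7) by simp
  then show ?thesis by (simp only: h(8))
qed

lemma congr_iff: assumes eq: "equivalence_relation C X th" and ef: "effective C X th"
  shows "\<exists>f. f \<in> Arr C \<and> Dom C f = X \<and> (\<forall>Q u v. u \<in> hom C Q X \<and> v \<in> hom C Q X \<longrightarrow> (congr C th u v \<longleftrightarrow> f \<cdot> u = f \<cdot> v))"
proof -
  obtain q1 q2 t where th: "th = (q1, q2, t)" by (cases th) auto
  have P: "is_product2 C X X q1 q2" and tm: "is_mono C t" and ct: "Cod C t = Dom C q1"
    using eq unfolding th equivalence_relation_def by auto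
  obtain f p k i where f: "Dom C f = X" "kernel_pair C f p k" "iso C i" "i \<in> hom C (Dom C p) (Dom C t)"
    "q1 \<cdot> (t \<cdot> i) = p" "q2 \<cdot> (t \<cdot> i) = k"
    using ef unfolding th effective_def by auto
  note PD = prod2D[OF P]
  have kp: "is_pullback C f f p k" using f(2) unfolding kernel_pair_def .
  note KD = pbD[OF kp]
  obtain g where g: "g \<in> hom C (Cod C i) (Dom C i)" "g \<cdot> i = Id C (Dom C i)" "i \<cdot> g = Id C (Cod C i)"
    using f(3) unfolding iso_def by blast
  have ta: "t \<in> Arr C" using tm mono_arr by blast
  have ia: "i \<in> Arr C" "Dom C i = Dom C p" "Cod C i = Dom C t" using f(4) by (auto simp: hom_iff)
  have ga: "g \<in> Arr C" "Dom C g = Dom C t" "Cod C g = Dom C p" using g(1) ia by (auto simp: hom_iff)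
  have "\<forall>Q u v. u \<in> hom C Q X \<and> v \<in> hom C Q X \<longrightarrow> (congr C th u v \<longleftrightarrow> f \<cdot> u = f \<cdot> v)"
  proof (intro allI impI)
    fix Q u v assume uv: "u \<in> hom C Q X \<and> v \<in> hom C Q X"
    have ua: "u \<in> Arr C" "Dom C u = Q" "Cod C u = X" "v \<in> Arr C" "Dom C v = Q" "Cod C v = X"
      using uv by (auto simp: hom_iff)
    define T where "T = tuple2 C q1 q2 u v"
    have T: "T \<in> hom C Q (Dom C q1)" "q1 \<cdot> T = u" "q2 \<cdot> T = v"
      using tuple2_prop[OF P ua(1) ua(4)] ua unfolding T_def by auto
    have Ta: "Dom C T = Q" using T(1) by (auto simp: hom_iff)
    have cg: "congr C th u v \<longleftrightarrow> gmem C T t" unfolding th congr_def T_def by simp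
    show "congr C th u v \<longleftrightarrow> f \<cdot> u = f \<cdot> v"
    proof
      assume "congr C th u v"
      then obtain s where s: "s \<in> hom C Q (Dom C t)" "t \<cdot> s = T" using cg Ta unfolding gmem_def by auto
      have sa: "s \<in> Arr C" "Dom C s = Q" "Cod C s = Dom C t" using s by (auto simp: hom_iff)
      define s' where "s' = g \<cdot> s"
      have s'a: "s' \<in> Arr C" "Dom C s' = Q" "Cod C s' = Dom C p" using sa ga unfolding s'_def by auto
      have is_: "i \<cdot> s' = s"
      proof -
        have "i \<cdot> s' = (i \<cdot> g) \<cdot> s" using ia ga sa unfolding s'_def by simp
        also have "\<dots> = s" using g(3) ia sa comp_id_l[OF sa(1)] by simp
        finally show ?thesis .
      qed
      have pu: "p \<cdot> s' = u" using assoc3[OF PD(1) ta ia(1) s'a(1) _ _ _ f(5)] ct ia s'a is_ s T by simp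
      have kv: "k \<cdot> s' = v" using assoc3[OF PD(2) ta ia(1) s'a(1) _ _ _ f(6)] ct ia s'a is_ s T PD by simp
      have "f \<cdot> (p \<cdot> s') = f \<cdot> (k \<cdot> s')"
        by (rule eq_ext[OF KD(9) KD(1) KD(3) KD(1) KD(4) s'a(1)]) (use KD s'a in auto)
      then show "f \<cdot> u = f \<cdot> v" by (simp only: pu kv)
    next
      assume fuv: "f \<cdot> u = f \<cdot> v"
      obtain h where h: "h \<in> hom C Q (Dom C p)" "p \<cdot> h = u" "k \<cdot> h = v"
        using pb_univ[OF kp ua(1) ua(4)] ua KD fuv f(1) by auto
      have ha: "h \<in> Arr C" "Dom C h = Q" "Cod C h = Dom C p" using h by (auto simp: hom_iff)
      define s where "s = i \<cdot> h"
      have sa: "s \<in> hom C Q (Dom C t)" using ha ia unfolding s_def by (simp add: hom_iff)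
      have ts: "t \<cdot> s \<in> hom C Q (Dom C q1)" using sa ta ct by (auto simp: hom_iff)
      have "q1 \<cdot> (t \<cdot> s) = u" using assoc3[OF PD(1) ta ia(1) ha(1) _ _ _ f(5)] ct ia ha h unfolding s_def by simp
      moreover have "q2 \<cdot> (t \<cdot> s) = v" using assoc3[OF PD(2) ta ia(1) ha(1) _ _ _ f(6)] ct ia ha h PD unfolding s_def by simp
      ultimately have "T = t \<cdot> s" unfolding T_def using tuple2_uniq[OF P ua(1) ua(4)] ua ts by auto
      then show "congr C th u v" using cg sa Ta unfolding gmem_def by auto
    qed
  qed
  then show ?thesis using KD f(1) by blast
qed

end

theorem lemma5p7:
  fixes C :: "('o,'a) cat"
  assumes "regular_category C" and "majority_category C"
  shows "pairwise_CRT C"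
proof -
  interpret rcat C by unfold_locales (rule assms(1))
  show ?thesis unfolding pairwise_CRT_def
  proof (intro ballI allI impI)
    fix X S m a th
    assume X: "X \<in> Obj C" and S: "S \<in> Obj C" and H: "1 \<le> m \<and>
        (\<forall>i<m. a i \<in> hom C S X \<and> equivalence_relation C X (th i) \<and> effective C X (th i)) \<and>
        approx_pairwise_solvable C X S {..<m} a th"
    have "\<forall>i<m. \<exists>f. f \<in> Arr C \<and> Dom C f = X \<and>
      (\<forall>Q u v. u \<in> hom C Q X \<and> v \<in> hom C Q X \<longrightarrow> (congr C (th i) u v \<longleftrightarrow> Comp C f u = Comp C f v))"
      using congr_iff H by blast
    then obtain F where F: "\<And>i. i < m \<Longrightarrow> F i \<in> Arr C \<and> Dom C (F i) = X \<and>
      (\<forall>Q u v. u \<in> hom C Q X \<and> v \<in> hom C Q X \<longrightarrow> (congr C (th i) u v \<longleftrightarrow> Comp C (F i) u = Comp C (F i) v))"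
      by metis
    define c where "c i = Comp C (F i) (a i)" for i
    have ai: "a i \<in> Arr C" "Dom C (a i) = S" "Cod C (a i) = X" if "i < m" for i
      using H that by (auto simp: hom_iff)
    have key: "congr C (th i) b (Comp C (a i) \<alpha>) \<longleftrightarrow> Comp C (F i) b = Comp C (c i) \<alpha>"
      if i: "i < m" and al: "\<alpha> \<in> hom C Q S" and b: "b \<in> hom C Q X" for i Q \<alpha> b
    proof -
      have al': "\<alpha> \<in> Arr C" "Dom C \<alpha> = Q" "Cod C \<alpha> = S" using al by (auto simp: hom_iff)
      have aa: "Comp C (a i) \<alpha> \<in> hom C Q X" using ai[OF i] al' by (simp add: hom_iff)
      have "Comp C (F i) (Comp C (a i) \<alpha>) = Comp C (c i) \<alpha>"
        unfolding c_def using F[OF i] ai[OF i] al' by simp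
      then show ?thesis using F[OF i] b aa by auto
    qed
    have wt: "wt X S {..<m} F c" unfolding wt_def
      using F ai unfolding c_def by (auto simp: hom_iff)
    have pw: "\<forall>i\<in>{..<m}. \<forall>j\<in>{..<m}. asol X S {i,j} F c"
    proof (intro ballI)
      fix i j assume ij: "i \<in> {..<m}" "j \<in> {..<m}"
      then obtain Q \<alpha> b where s: "regular_epi C \<alpha>" "\<alpha> \<in> hom C Q S" "b \<in> hom C Q X"
        "\<forall>l\<in>{i,j}. congr C (th l) b (Comp C (a l) \<alpha>)"
        using H unfolding approx_pairwise_solvable_def approx_solvable_def by blast
      have "sol X S {i,j} F c Q \<alpha> b" unfolding sol_def using s key ij by auto
      then show "asol X S {i,j} F c" unfolding asol_def by blast
    qed
    have ne: "{..<m} \<noteq> {}"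
    proof -
      have "0 \<in> {..<m}" using H by simp
      then show ?thesis by blast
    qed
    have "asol X S {..<m} F c"
      by (rule main[OF assms(2) finite_lessThan ne wt pw])
    then obtain Q \<alpha> b where s: "sol X S {..<m} F c Q \<alpha> b" unfolding asol_def by blast
    then have "regular_epi C \<alpha>" "\<alpha> \<in> hom C Q S" "b \<in> hom C Q X" "\<forall>i\<in>{..<m}. congr C (th i) b (Comp C (a i) \<alpha>)"
      using key unfolding sol_def by auto
    then show "approx_solvable C X S {..<m} a th" unfolding approx_solvable_def by blast
  qed
qed

end
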